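(* Let $0<q<1$ and let $X\geq 0$ be a random variable whose distribution $P_X$ has a $q$-density $f$ such that the $q$-moments $m_q(n;f)$ are finite for all $n\in\mathbb{N}$. If $$\limsup_{n\to\infty}\frac{\ln m_q(n;f)}{n^2}=A<\frac{\ln(1/q)}{2},$$ then $P_X$ is $q$-moment determinate.
   Context: Fix $0<q<1$. All random variables are non-negative. The Jackson $q$-integral is $\int_0^a g(t)\,d_qt=a(1-q)\sum_{j=0}^\infty g(aq^j)q^j$ for $a>0$, and the improper $q$-integral is $\int_0^\infty g(t)\,d_qt=(1-q)\sum_{j=-\infty}^{\infty}g(q^j)q^j$. A function $f$ on $(0,\infty)$ is a $q$-density of $X$ (with distribution function $F_X$) if $F_X(x)=\int_0^x f(t)\,d_qt$ for all $x>0$. The $n$-th $q$-moment is $m_q(n;f)=m_q(n;X)=\int_0^\infty t^nf(t)\,d_qt=(1-q)\sum_{j\in\mathbb{Z}}q^{j(n+1)}f(q^j)$, $n\in\mathbb{N}_0$. For functions $f,g$ on $(0,\infty)$ write $f\sim g$ iff $f(q^j)=g(q^j)$ for all $j\in\mathbb{Z}$. A distribution $P_X$ with $q$-density $f$ and finite $q$-moments of all orders is $q$-moment determinate if, whenever $Y$ is a random variable with $q$-density $g$ and $m_q(k;Y)=m_q(k;X)$ for all $k\in\mathbb{N}_0$, one has $f\sim g$; otherwise it is $q$-moment indeterminate. *)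

theory Defs
  imports "HOL-Probability.Probability"
begin

definition distr_fun :: "real measure \<Rightarrow> real \<Rightarrow> real" where
  "distr_fun P x = measure P {..x}"

definition jackson_int :: "real \<Rightarrow> real \<Rightarrow> (real \<Rightarrow> real) \<Rightarrow> real" where
  "jackson_int q a g = a * (1 - q) * (\<Sum>j. g (a * q ^ j) * q ^ j)"

definition q_density :: "real \<Rightarrow> real measure \<Rightarrow> (real \<Rightarrow> real) \<Rightarrow> bool" where
  "q_density q P f \<longleftrightarrow>
     (\<forall>x>0. summable (\<lambda>j. f (x * q ^ j) * q ^ j) \<and> distr_fun P x = jackson_int q x f)"

definition q_moment_term :: "real \<Rightarrow> nat \<Rightarrow> (real \<Rightarrow> real) \<Rightarrow> int \<Rightarrow> real" where
  "q_moment_term q n f j = q powi (j * int (n + 1)) * f (q powi j)"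

definition q_moment_finite :: "real \<Rightarrow> nat \<Rightarrow> (real \<Rightarrow> real) \<Rightarrow> bool" where
  "q_moment_finite q n f \<longleftrightarrow> q_moment_term q n f summable_on (UNIV :: int set)"

definition q_moment :: "real \<Rightarrow> nat \<Rightarrow> (real \<Rightarrow> real) \<Rightarrow> real" where
  "q_moment q n f = (1 - q) * infsum (q_moment_term q n f) (UNIV :: int set)"

definition q_equiv :: "real \<Rightarrow> (real \<Rightarrow> real) \<Rightarrow> (real \<Rightarrow> real) \<Rightarrow> bool" where
  "q_equiv q f g \<longleftrightarrow> (\<forall>j::int. f (q powi j) = g (q powi j))"

definition nonneg_distribution :: "real measure \<Rightarrow> bool" where
  "nonneg_distribution P \<longleftrightarrow> prob_space P \<and> sets P = sets borel \<and> (AE x in P. 0 \<le> x)"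

text \<open>q-moment determinacy of a distribution P with q-density f (and finite q-moments).
  Every random variable Y is represented by its distribution.\<close>
definition q_moment_determinate :: "real \<Rightarrow> real measure \<Rightarrow> (real \<Rightarrow> real) \<Rightarrow> bool" where
  "q_moment_determinate q P f \<longleftrightarrow>
     (\<forall>Q g. nonneg_distribution Q \<and> q_density q Q g \<and>
        (\<forall>k. q_moment_finite q k g \<and> q_moment q k g = q_moment q k f)
        \<longrightarrow> q_equiv q f g)"

end

theory Submission
  imports Defs
begin


definition Zp :: "real \<Rightarrow> (int \<Rightarrow> real) \<Rightarrow> bool" where
  "Zp q c \<longleftrightarrow> (\<forall>n::nat. ((\<lambda>j. q powi (j * int (n+1)) * c j) has_sum 0) UNIV)"

lemma Zp_lin:
  assumes q: "q \<noteq> 0" and Z: "Zp q c"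
  shows "Zp q (\<lambda>j. (\<alpha> * q powi j + \<gamma>) * c j)"
  unfolding Zp_def
proof
  fix n :: nat
  have h1: "((\<lambda>j. q powi (j * int (Suc n+1)) * c j) has_sum 0) UNIV"
    using Z unfolding Zp_def by blast
  have h2: "((\<lambda>j. q powi (j * int (n+1)) * c j) has_sum 0) UNIV"
    using Z unfolding Zp_def by blast
  have "((\<lambda>j. \<alpha> * (q powi (j * int (Suc n+1)) * c j) + \<gamma> * (q powi (j * int (n+1)) * c j)) has_sum (\<alpha> * 0 + \<gamma> * 0)) UNIV"
    by (intro has_sum_add has_sum_cmult_right h1 h2)
  moreover have "\<alpha> * (q powi (j * int (Suc n+1)) * c j) + \<gamma> * (q powi (j * int (n+1)) * c j)
      = q powi (j * int (n+1)) * ((\<alpha> * q powi j + \<gamma>) * c j)" for j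
  proof -
    have "q powi (j * int (Suc n+1)) = q powi (j * int (n+1)) * q powi j"
      using q by (simp add: power_int_add[symmetric] algebra_simps)
    thus ?thesis by (simp add: algebra_simps)
  qed
  ultimately show "((\<lambda>j. q powi (j * int (n+1)) * ((\<alpha> * q powi j + \<gamma>) * c j)) has_sum 0) UNIV"
    by simp
qed

lemma Zp_prod:
  assumes q: "q \<noteq> 0" and Z: "Zp q c" and fin: "finite I"
  shows "Zp q (\<lambda>j. (\<Prod>i\<in>I. \<alpha> i * q powi j + \<gamma> i) * c j)"
  using fin
proof (induction I rule: finite_induct)
  case empty then show ?case using Z by simp
next
  case (insert x F)
  have "Zp q (\<lambda>j. (\<alpha> x * q powi j + \<gamma> x) * ((\<Prod>i\<in>F. \<alpha> i * q powi j + \<gamma> i) * c j))"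
    by (rule Zp_lin[OF q insert.IH])
  then show ?case using insert.hyps by (simp add: mult.assoc)
qed



lemma extract0:
  fixes T B :: "int \<Rightarrow> real"
  assumes T: "(T has_sum 0) UNIV" and B: "(B has_sum SB) UNIV"
    and Bnn: "\<And>j. 0 \<le> B j" and bd: "\<And>j. j \<noteq> 0 \<Longrightarrow> \<bar>T j\<bar> \<le> B j"
  shows "\<bar>T 0\<bar> \<le> SB"
proof -
  have key: "V 0 \<le> s" if V: "(V has_sum s) UNIV" and nn: "\<And>j. j \<noteq> 0 \<Longrightarrow> 0 \<le> V j" for V :: "int \<Rightarrow> real" and s
  proof -
    have h: "(V has_sum (V 0)) {0}" using has_sum_finite[of "{0::int}" V] by simp
    show ?thesis
      by (rule has_sum_mono_neutral[OF h V]) (use nn in auto)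
  qed
  have bd1: "0 \<le> B j + T j" "0 \<le> B j + - T j" if "j \<noteq> 0" for j
    using bd[OF that] by (auto simp: abs_le_iff)
  have 1: "B 0 + T 0 \<le> SB + 0"
    by (rule key[of "\<lambda>j. B j + T j"]) (use has_sum_add[OF B T] bd1 in auto)
  have T': "((\<lambda>j. - T j) has_sum (-0)) UNIV" using T has_sum_uminusI by blast
  have 2: "B 0 + - T 0 \<le> SB + - 0"
    by (rule key[of "\<lambda>j. B j + - T j"]) (use has_sum_add[OF B T'] bd1 in auto)
  show ?thesis using 1 2 Bnn[of 0] by linarith
qed



definition PP :: "real \<Rightarrow> nat \<Rightarrow> nat \<Rightarrow> int \<Rightarrow> real" where
  "PP q N M j = (\<Prod>i\<in>{1..N}. q powi j - q ^ i) * (\<Prod>i\<in>{1..M}. q ^ i * q powi j - 1)"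

lemma Zp_PP:
  assumes q: "q \<noteq> 0" and Z: "Zp q c"
  shows "Zp q (\<lambda>j. PP q N M j * c j)"
proof -
  have 1: "Zp q (\<lambda>j. (\<Prod>i\<in>{1..M}. q ^ i * q powi j + (-1)) * c j)"
    by (rule Zp_prod[OF q Z]) simp
  have 2: "Zp q (\<lambda>j. (\<Prod>i\<in>{1..N}. 1 * q powi j + (- (q ^ i))) * ((\<Prod>i\<in>{1..M}. q ^ i * q powi j + (-1)) * c j))"
    by (rule Zp_prod[OF q 1]) simp
  then show ?thesis by (simp add: PP_def mult.assoc)
qed

lemma PP_zero:
  assumes q: "0 < q" and "j \<noteq> 0" "- int M \<le> j" "j \<le> int N"
  shows "PP q N M j = 0"
proof (cases "j > 0")
  case True
  then have "nat j \<in> {1..N}" using assms by auto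
  moreover have "q powi j - q ^ nat j = 0" using True by (simp add: power_int_def)
  ultimately have "(\<Prod>i\<in>{1..N}. q powi j - q ^ i) = 0"
    by (metis (no_types, lifting) finite_atLeastAtMost prod_zero)
  then show ?thesis by (simp add: PP_def)
next
  case False
  then have "nat (-j) \<in> {1..M}" using assms by auto
  moreover have "q ^ nat (-j) * q powi j - 1 = 0" using False q
    by (simp add: power_int_def field_simps)
  ultimately have "(\<Prod>i\<in>{1..M}. q ^ i * q powi j - 1) = 0"
    by (metis (no_types, lifting) finite_atLeastAtMost prod_zero)
  then show ?thesis by (simp add: PP_def)
qed

lemma PP_big:
  assumes q: "0 < q" "q < 1" and j: "j > int N"
  shows "\<bar>PP q N M j\<bar> \<le> q ^ (\<Sum>i\<in>{1..N}. i)"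
proof -
  have qj: "q powi j = q ^ nat j" using j by (simp add: power_int_def)
  have a: "\<bar>\<Prod>i\<in>{1..N}. q powi j - q ^ i\<bar> \<le> (\<Prod>i\<in>{1..N}. q ^ i)"
    unfolding abs_prod
  proof (rule prod_mono)
    fix i assume i: "i \<in> {1..N}"
    have "q ^ nat j \<le> q ^ i" using i j q by (intro power_decreasing) auto
    then show "0 \<le> \<bar>q powi j - q ^ i\<bar> \<and> \<bar>q powi j - q ^ i\<bar> \<le> q ^ i"
      using qj q by auto
  qed
  have b: "\<bar>\<Prod>i\<in>{1..M}. q ^ i * q powi j - 1\<bar> \<le> 1"
    unfolding abs_prod
  proof (rule prod_le_1)
    fix i assume i: "i \<in> {1..M}"
    have "q ^ i * q ^ nat j = q ^ (i + nat j)" by (simp add: power_add)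
    moreover have "q ^ (i + nat j) \<le> 1" using q by (simp add: power_le_one)
    moreover have "0 < q ^ (i + nat j)" using q by simp
    ultimately show "0 \<le> \<bar>q ^ i * q powi j - 1\<bar> \<and> \<bar>q ^ i * q powi j - 1\<bar> \<le> 1"
      using qj by auto
  qed
  have "\<bar>PP q N M j\<bar> \<le> (\<Prod>i\<in>{1..N}. q ^ i) * 1"
    unfolding PP_def abs_mult by (rule mult_mono[OF a b]) (use q in \<open>auto intro!: prod_nonneg\<close>)
  then show ?thesis by (simp add: power_sum)
qed

lemma PP_small:
  assumes q: "0 < q" "q < 1" and j: "j < - int M"
  shows "\<bar>PP q N M j\<bar> \<le> (q powi j) ^ (N + M) * q ^ (\<Sum>i\<in>{1..M}. i)"
proof -
  define k where "k = nat (-j)"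
  have k: "k > M" "j = - int k" using j by (auto simp: k_def)
  have qj: "q powi j = inverse q ^ k" using k by (simp add: power_int_def)
  have iq: "1 \<le> inverse q" using q by (simp add: field_simps)
  have qj1: "1 \<le> q powi j" using iq qj by (simp add: one_le_power)
  have a: "\<bar>\<Prod>i\<in>{1..N}. q powi j - q ^ i\<bar> \<le> (\<Prod>i\<in>{1..N}. q powi j)"
    unfolding abs_prod
  proof (rule prod_mono)
    fix i assume i: "i \<in> {1..N}"
    have "q ^ i \<le> 1" using q by (simp add: power_le_one)
    moreover have "0 < q ^ i" using q by simp
    ultimately show "0 \<le> \<bar>q powi j - q ^ i\<bar> \<and> \<bar>q powi j - q ^ i\<bar> \<le> q powi j"
      using qj1 by auto
  qed
  have b: "\<bar>\<Prod>i\<in>{1..M}. q ^ i * q powi j - 1\<bar> \<le> (\<Prod>i\<in>{1..M}. q ^ i * q powi j)"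
    unfolding abs_prod
  proof (rule prod_mono)
    fix i assume i: "i \<in> {1..M}"
    have "q ^ i * q powi j = inverse q ^ (k - i)"
    proof -
      have e: "q ^ k = q ^ i * q ^ (k - i)" using i k by (simp add: power_add[symmetric])
      show ?thesis using q by (simp add: qj e power_inverse field_simps)
    qed
    moreover have "1 \<le> inverse q ^ (k - i)" using iq by (simp add: one_le_power)
    ultimately show "0 \<le> \<bar>q ^ i * q powi j - 1\<bar> \<and> \<bar>q ^ i * q powi j - 1\<bar> \<le> q ^ i * q powi j"
      by auto
  qed
  have "\<bar>PP q N M j\<bar> \<le> (\<Prod>i\<in>{1..N}. q powi j) * (\<Prod>i\<in>{1..M}. q ^ i * q powi j)"
    unfolding PP_def abs_mult by (rule mult_mono[OF a b]) (use q in \<open>auto intro!: prod_nonneg\<close>)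
  also have "\<dots> = (q powi j) ^ N * ((\<Prod>i\<in>{1..M}. q ^ i) * (q powi j) ^ M)"
    by (simp add: prod.distrib)
  also have "\<dots> = (q powi j) ^ (N + M) * q ^ (\<Sum>i\<in>{1..M}. i)"
    by (simp add: power_sum power_add)
  finally show ?thesis .
qed

lemma PP_0:
  assumes q: "0 < q" "q < 1"
  shows "(1 - q) ^ (N + M) \<le> \<bar>PP q N M 0\<bar>"
proof -
  have a: "(1 - q) ^ N \<le> (\<Prod>i\<in>{1..N}. \<bar>q powi 0 - q ^ i\<bar>)"
  proof -
    have "(\<Prod>i\<in>{1..N}. (1 - q)) \<le> (\<Prod>i\<in>{1..N}. \<bar>q powi 0 - q ^ i\<bar>)"
    proof (rule prod_mono)
      fix i :: nat assume i: "i \<in> {1..N}"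
      have "q ^ i \<le> q" using q i by (metis atLeastAtMost_iff less_eq_real_def power_decreasing power_one_right)
      moreover have "q ^ i \<le> 1" using q by (simp add: power_le_one)
      ultimately show "0 \<le> 1 - q \<and> 1 - q \<le> \<bar>q powi 0 - q ^ i\<bar>" using q by auto
    qed
    then show ?thesis by simp
  qed
  have b: "(1 - q) ^ M \<le> (\<Prod>i\<in>{1..M}. \<bar>q ^ i * q powi 0 - 1\<bar>)"
  proof -
    have "(\<Prod>i\<in>{1..M}. (1 - q)) \<le> (\<Prod>i\<in>{1..M}. \<bar>q ^ i * q powi 0 - 1\<bar>)"
    proof (rule prod_mono)
      fix i :: nat assume i: "i \<in> {1..M}"
      have "q ^ i \<le> q" using q i by (metis atLeastAtMost_iff less_eq_real_def power_decreasing power_one_right)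
      moreover have "q ^ i \<le> 1" using q by (simp add: power_le_one)
      ultimately show "0 \<le> 1 - q \<and> 1 - q \<le> \<bar>q ^ i * q powi 0 - 1\<bar>" using q by auto
    qed
    then show ?thesis by simp
  qed
  have "(1 - q) ^ N * (1 - q) ^ M \<le> (\<Prod>i\<in>{1..N}. \<bar>q powi 0 - q ^ i\<bar>) * (\<Prod>i\<in>{1..M}. \<bar>q ^ i * q powi 0 - 1\<bar>)"
    by (rule mult_mono[OF a b]) (use q in \<open>auto intro!: prod_nonneg\<close>)
  then show ?thesis by (simp add: PP_def abs_mult abs_prod power_add)
qed



definition Am :: "real \<Rightarrow> (int \<Rightarrow> real) \<Rightarrow> nat \<Rightarrow> real" where
  "Am q c n = infsum (\<lambda>j. q powi (j * int (n+1)) * \<bar>c j\<bar>) UNIV"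

lemma powi_nat_mult: "(x::real) powi (j * int n) = (x powi j) ^ n"
  by (simp add: power_int_mult)

lemma core_bound:
  assumes q: "0 < q" "q < 1" and Z: "Zp q c"
    and S: "\<And>n. (\<lambda>j. q powi (j * int (n+1)) * \<bar>c j\<bar>) summable_on UNIV"
  shows "(1 - q) ^ (N + M) * \<bar>c 0\<bar> \<le> q ^ (\<Sum>i\<in>{1..N}. i) * Am q c 0 + q ^ (\<Sum>i\<in>{1..M}. i) * Am q c (N + M)"
proof -
  define E1 where "E1 = q ^ (\<Sum>i\<in>{1..N}. i)"
  define E2 where "E2 = q ^ (\<Sum>i\<in>{1..M}. i)"
  define T where "T j = q powi (j * int (0+1)) * (PP q N M j * c j)" for j
  define B where "B j = E1 * (q powi (j * int (0+1)) * \<bar>c j\<bar>) + E2 * (q powi (j * int (N+M+1)) * \<bar>c j\<bar>)" for j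
  have T: "(T has_sum 0) UNIV"
  proof -
    have "\<forall>n::nat. ((\<lambda>j. q powi (j * int (n+1)) * (PP q N M j * c j)) has_sum 0) UNIV"
      using Zp_PP[OF _ Z, of N M] q unfolding Zp_def by auto
    then have "((\<lambda>j. q powi (j * int (0+1)) * (PP q N M j * c j)) has_sum 0) UNIV" by blast
    then show ?thesis unfolding T_def .
  qed
  have B: "(B has_sum (E1 * Am q c 0 + E2 * Am q c (N + M))) UNIV"
    unfolding B_def Am_def
    by (intro has_sum_add has_sum_cmult_right has_sum_infsum S)
  have E: "0 \<le> E1" "0 \<le> E2" using q by (auto simp: E1_def E2_def)
  have Bnn: "0 \<le> B j" for j using E q by (auto simp: B_def)
  have bd: "\<bar>T j\<bar> \<le> B j" if j: "j \<noteq> 0" for j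
  proof -
    have qj: "0 < q powi j" using q by simp
    have aT: "\<bar>T j\<bar> = q powi j * \<bar>PP q N M j\<bar> * \<bar>c j\<bar>"
      using qj by (simp add: T_def abs_mult)
    consider "j > int N" | "j < - int M" | "- int M \<le> j \<and> j \<le> int N" by linarith
    then show ?thesis
    proof cases
      case 1
      have "\<bar>T j\<bar> \<le> q powi j * E1 * \<bar>c j\<bar>"
        unfolding aT E1_def using PP_big[OF q 1, of M] qj
        by (intro mult_right_mono mult_left_mono) auto
      also have "\<dots> \<le> B j" unfolding B_def using E q by (simp add: algebra_simps)
      finally show ?thesis .
    next
      case 2
      have "\<bar>T j\<bar> \<le> q powi j * ((q powi j) ^ (N + M) * E2) * \<bar>c j\<bar>"
        unfolding aT E2_def using PP_small[OF q 2, of N] qj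
        by (intro mult_right_mono mult_left_mono) auto
      also have "\<dots> = E2 * (q powi (j * int (N+M+1)) * \<bar>c j\<bar>)"
        by (simp only: powi_nat_mult) (simp add: algebra_simps)
      also have "\<dots> \<le> B j" unfolding B_def using E q by simp
      finally show ?thesis .
    next
      case 3
      then have "PP q N M j = 0" using PP_zero[OF q(1) j] by auto
      then show ?thesis using Bnn by (simp add: T_def)
    qed
  qed
  have "\<bar>T 0\<bar> \<le> E1 * Am q c 0 + E2 * Am q c (N + M)"
    by (rule extract0[OF T B Bnn bd])
  moreover have "\<bar>T 0\<bar> = \<bar>PP q N M 0\<bar> * \<bar>c 0\<bar>" by (simp add: T_def abs_mult)
  moreover have "(1 - q) ^ (N + M) * \<bar>c 0\<bar> \<le> \<bar>PP q N M 0\<bar> * \<bar>c 0\<bar>"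
    by (rule mult_right_mono[OF PP_0[OF q]]) simp
  ultimately show ?thesis unfolding E1_def E2_def by linarith
qed



lemma qsum_bound:
  assumes q: "0 < q" "q < 1"
  shows "q ^ (\<Sum>i\<in>{1..N}. i) \<le> exp (ln q * real N ^ 2 / 2)"
proof -
  define s where "s = (\<Sum>i\<in>{1..N}. i)"
  have "2 * real s = real N * (real N + 1)"
    using double_gauss_sum_from_Suc_0[of N, where 'a=real] by (simp add: s_def of_nat_sum)
  then have s: "real N ^ 2 / 2 \<le> real s" by (simp add: power2_eq_square algebra_simps)
  have lq: "ln q < 0" using q by simp
  have "q ^ s = exp (real s * ln q)" using q by (simp add: exp_of_nat_mult)
  also have "\<dots> \<le> exp (ln q * real N ^ 2 / 2)"
    using mult_left_mono_neg[OF s, of "ln q"] lq by (simp add: algebra_simps)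
  finally show ?thesis by (simp add: s_def)
qed

lemma exp_quad_0:
  fixes a b :: real assumes a: "a < 0"
  shows "(\<lambda>N::nat. exp (a * real N ^ 2 + b * real N)) \<longlonglongrightarrow> 0"
proof -
  have ev: "\<forall>\<^sub>F N in sequentially. a * real N ^ 2 + b * real N \<le> - real N"
  proof -
    obtain N0 :: nat where N0: "(\<bar>b\<bar> + 1) / (- a) \<le> real N0" using real_arch_simple by blast
    show ?thesis unfolding eventually_sequentially
    proof (intro exI allI impI)
      fix N assume "N0 \<le> N"
      then have "(\<bar>b\<bar> + 1) / (- a) \<le> real N" using N0 by linarith
      then have "\<bar>b\<bar> + 1 \<le> - a * real N" using a by (simp add: field_simps)
      then have "a * real N + b \<le> -1" by linarith
      then have "real N * (a * real N + b) \<le> real N * (-1)" by (intro mult_left_mono) auto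
      then show "a * real N ^ 2 + b * real N \<le> - real N" by (simp add: power2_eq_square algebra_simps)
    qed
  qed
  have lim: "filterlim (\<lambda>N::nat. - real N) at_bot sequentially"
    using filterlim_real_sequentially filterlim_uminus_at_top by (simp add: filterlim_uminus_at_bot)
  have "filterlim (\<lambda>N::nat. a * real N ^ 2 + b * real N) at_bot sequentially"
    by (rule filterlim_at_bot_mono[OF lim ev])
  then show ?thesis by (rule filterlim_compose[OF exp_at_bot])
qed



lemma choose_r:
  fixes \<beta> l :: real assumes "\<beta> < l / 2" and l0: "0 < l"
  shows "\<exists>r::nat. \<beta> * (1 + real r) ^ 2 < l * real r ^ 2 / 2"
proof (cases "\<beta> \<le> 0")
  case True
  then have "\<beta> * (1 + real 1) ^ 2 \<le> 0" by (simp add: mult_nonpos_nonneg)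
  moreover have "0 < l * real 1 ^ 2 / 2" using assms True by simp
  ultimately show ?thesis by (intro exI[of _ 1]) linarith
next
  case False
  define \<delta> where "\<delta> = l / 2 - \<beta>"
  have d: "\<delta> > 0" using assms by (simp add: \<delta>_def)
  define r where "r = nat \<lceil>3 * \<beta> / \<delta>\<rceil> + 1"
  have r1: "real r \<ge> 1" by (simp add: r_def)
  have "3 * \<beta> / \<delta> < real r" unfolding r_def by linarith
  then have r2: "3 * \<beta> < \<delta> * real r" using d by (simp add: field_simps)
  have "\<beta> * (1 + real r) ^ 2 = \<beta> * real r ^ 2 + \<beta> * (2 * real r + 1)"
    by (simp add: power2_eq_square algebra_simps)
  also have "\<beta> * (2 * real r + 1) \<le> \<beta> * (3 * real r)"
    using False r1 by (intro mult_left_mono) auto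
  also have "\<beta> * (3 * real r) < \<delta> * real r * real r"
    using r2 r1 by (simp add: mult.assoc mult_strict_right_mono)
  finally have "\<beta> * (1 + real r) ^ 2 < \<beta> * real r ^ 2 + \<delta> * real r * real r" by simp
  also have "\<dots> = l * real r ^ 2 / 2" by (simp add: \<delta>_def power2_eq_square algebra_simps)
  finally show ?thesis by blast
qed

lemma core:
  assumes q: "0 < q" "q < 1" and Z: "Zp q c"
    and S: "\<And>n. (\<lambda>j. q powi (j * int (n+1)) * \<bar>c j\<bar>) summable_on UNIV"
    and \<beta>: "\<beta> < - ln q / 2"
    and ev: "\<forall>\<^sub>F n in sequentially. Am q c n \<le> K * exp (\<beta> * real n ^ 2 + \<gamma> * real n)"
  shows "c 0 = 0"
proof -
  define l where "l = - ln q"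
  define \<mu> where "\<mu> = - ln (1 - q)"
  have l: "l > 0" using q by (simp add: l_def)
  obtain r :: nat where r: "\<beta> * (1 + real r) ^ 2 < l * real r ^ 2 / 2"
    using choose_r[OF _ l] \<beta> unfolding l_def by blast
  obtain n0 where n0: "\<And>n. n \<ge> n0 \<Longrightarrow> Am q c n \<le> K * exp (\<beta> * real n ^ 2 + \<gamma> * real n)"
    using ev unfolding eventually_sequentially by blast
  define a1 where "a1 = - l / 2"
  define b1 where "b1 = \<mu> * (1 + real r)"
  define a2 where "a2 = \<beta> * (1 + real r) ^ 2 - l * real r ^ 2 / 2"
  define b2 where "b2 = (\<mu> + \<gamma>) * (1 + real r)"
  define F where "F N = Am q c 0 * exp (a1 * real N ^ 2 + b1 * real N) + K * exp (a2 * real N ^ 2 + b2 * real N)" for N :: nat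
  have "F \<longlonglongrightarrow> Am q c 0 * 0 + K * 0"
    unfolding F_def
    by (intro tendsto_add tendsto_mult tendsto_const exp_quad_0) (use l r in \<open>auto simp: a1_def a2_def\<close>)
  then have Flim: "F \<longlonglongrightarrow> 0" by simp
  have Amnn: "0 \<le> Am q c n" for n
    unfolding Am_def using q by (intro infsum_nonneg) auto
  have bd: "\<bar>c 0\<bar> \<le> F N" if N: "N \<ge> n0" for N
  proof -
    define M where "M = r * N"
    define n where "n = N + M"
    have rn: "real n = (1 + real r) * real N" "real M = real r * real N"
      by (simp_all add: n_def M_def algebra_simps)
    have nn0: "n \<ge> n0" using N by (simp add: n_def)
    have cb: "(1 - q) ^ n * \<bar>c 0\<bar> \<le> q ^ (\<Sum>i\<in>{1..N}. i) * Am q c 0 + q ^ (\<Sum>i\<in>{1..M}. i) * Am q c n"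
      using core_bound[OF q Z S, of N M] by (simp add: n_def)
    have Kpos: "0 \<le> K * exp (\<beta> * real n ^ 2 + \<gamma> * real n)" using n0[OF nn0] Amnn[of n] by linarith
    have "q ^ (\<Sum>i\<in>{1..N}. i) * Am q c 0 \<le> exp (ln q * real N ^ 2 / 2) * Am q c 0"
      by (rule mult_right_mono[OF qsum_bound[OF q] Amnn])
    moreover have "q ^ (\<Sum>i\<in>{1..M}. i) * Am q c n \<le> exp (ln q * real M ^ 2 / 2) * (K * exp (\<beta> * real n ^ 2 + \<gamma> * real n))"
      by (rule mult_mono[OF qsum_bound[OF q] n0[OF nn0]]) (use Amnn in auto)
    ultimately have cb2: "(1 - q) ^ n * \<bar>c 0\<bar> \<le> exp (ln q * real N ^ 2 / 2) * Am q c 0 + exp (ln q * real M ^ 2 / 2) * (K * exp (\<beta> * real n ^ 2 + \<gamma> * real n))"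
      using cb by linarith
    have e1: "exp (\<mu> * real n) * (1 - q) ^ n = 1"
    proof -
      have "(1 - q) ^ n = exp (real n * ln (1 - q))" using q by (simp add: exp_of_nat_mult)
      then show ?thesis by (simp add: \<mu>_def exp_add[symmetric])
    qed
    have "\<bar>c 0\<bar> = exp (\<mu> * real n) * ((1 - q) ^ n * \<bar>c 0\<bar>)" using e1 by (simp add: mult.assoc[symmetric])
    also have "\<dots> \<le> exp (\<mu> * real n) * (exp (ln q * real N ^ 2 / 2) * Am q c 0 + exp (ln q * real M ^ 2 / 2) * (K * exp (\<beta> * real n ^ 2 + \<gamma> * real n)))"
      by (rule mult_left_mono[OF cb2]) simp
    also have "\<dots> = Am q c 0 * exp (\<mu> * real n + ln q * real N ^ 2 / 2) + K * exp (\<mu> * real n + ln q * real M ^ 2 / 2 + (\<beta> * real n ^ 2 + \<gamma> * real n))"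
      by (simp add: exp_add algebra_simps)
    also have "\<dots> = F N"
      unfolding F_def rn a1_def a2_def b1_def b2_def l_def by (simp add: power2_eq_square algebra_simps)
    finally show ?thesis .
  qed
  have "\<bar>c 0\<bar> \<le> 0"
    by (rule tendsto_le[OF trivial_limit_sequentially Flim tendsto_const])
       (use bd in \<open>auto simp: eventually_sequentially\<close>)
  then show ?thesis by simp
qed



lemma shift_has_sum:
  fixes h :: "int \<Rightarrow> real"
  assumes "(h has_sum S) UNIV"
  shows "((\<lambda>j. h (j + j0)) has_sum S) UNIV"
proof -
  have b: "bij_betw (\<lambda>j. j + j0) UNIV UNIV"
    by (rule bij_betwI[of _ _ _ "\<lambda>j. j - j0"]) auto
  show ?thesis using has_sum_reindex_bij_betw[OF b, of h S] assms by simp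
qed

lemma powi_add_pos: "(0::real) < q \<Longrightarrow> q powi (a + b) = q powi a * q powi b"
  by (simp add: power_int_add)

lemma shift_term:
  fixes q :: real
  assumes q: "0 < q"
  shows "q powi (j * int (n+1)) * x = q powi (- j0 * int (n+1)) * (q powi ((j + j0) * int (n+1)) * x)"
proof -
  have e: "(j + j0) * int (n+1) = j * int (n+1) + j0 * int (n+1)" by (simp add: algebra_simps)
  have "q powi ((j + j0) * int (n+1)) = q powi (j * int (n+1)) * q powi (j0 * int (n+1))"
    by (simp only: e powi_add_pos[OF q])
  moreover have "q powi (- j0 * int (n+1)) * q powi (j0 * int (n+1)) = 1"
    using q by (simp add: powi_add_pos[symmetric])
  ultimately show ?thesis by (simp add: algebra_simps)
qed

lemma lattice_unique:
  assumes q: "0 < q" "q < 1" and Z: "Zp q c"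
    and S: "\<And>n. (\<lambda>j. q powi (j * int (n+1)) * \<bar>c j\<bar>) summable_on UNIV"
    and \<beta>: "\<beta> < - ln q / 2"
    and ev: "\<forall>\<^sub>F n in sequentially. Am q c n \<le> K * exp (\<beta> * real n ^ 2 + \<gamma> * real n)"
  shows "c j0 = 0"
proof -
  define c' where "c' j = c (j + j0)" for j
  define C where "C n = q powi (- j0 * int (n+1))" for n :: nat
  have Cpos: "0 < C n" for n using q by (simp add: C_def)
  have Z': "Zp q c'" unfolding Zp_def
  proof
    fix n :: nat
    have "((\<lambda>j. q powi (j * int (n+1)) * c j) has_sum 0) UNIV" using Z unfolding Zp_def by blast
    then have "((\<lambda>j. C n * (q powi ((j + j0) * int (n+1)) * c (j + j0))) has_sum (C n * 0)) UNIV"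
      by (intro has_sum_cmult_right shift_has_sum[where h = "\<lambda>j. q powi (j * int (n+1)) * c j"])
    moreover have "(\<lambda>j. C n * (q powi ((j + j0) * int (n+1)) * c (j + j0))) = (\<lambda>j. q powi (j * int (n+1)) * c' j)"
      unfolding C_def c'_def using shift_term[OF q(1)] by metis
    ultimately show "((\<lambda>j. q powi (j * int (n+1)) * c' j) has_sum 0) UNIV" by simp
  qed
  have Am': "((\<lambda>j. q powi (j * int (n+1)) * \<bar>c' j\<bar>) has_sum (C n * Am q c n)) UNIV" for n
  proof -
    have "((\<lambda>j. q powi (j * int (n+1)) * \<bar>c j\<bar>) has_sum Am q c n) UNIV"
      unfolding Am_def using S by (rule has_sum_infsum)
    then have "((\<lambda>j. C n * (q powi ((j + j0) * int (n+1)) * \<bar>c (j + j0)\<bar>)) has_sum (C n * Am q c n)) UNIV"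
      by (intro has_sum_cmult_right shift_has_sum[where h = "\<lambda>j. q powi (j * int (n+1)) * \<bar>c j\<bar>"])
    moreover have "(\<lambda>j. C n * (q powi ((j + j0) * int (n+1)) * \<bar>c (j + j0)\<bar>)) = (\<lambda>j. q powi (j * int (n+1)) * \<bar>c' j\<bar>)"
      unfolding C_def c'_def using shift_term[OF q(1)] by metis
    ultimately show ?thesis by simp
  qed
  have S': "(\<lambda>j. q powi (j * int (n+1)) * \<bar>c' j\<bar>) summable_on UNIV" for n
    using Am' summable_on_def by blast
  have AmEq: "Am q c' n = C n * Am q c n" for n
    unfolding Am_def[of q c' n] using Am'[of n] by (rule infsumI)
  have Cexp: "C n = q powi (- j0) * exp ((- real_of_int j0 * ln q) * real n)" for n
  proof -
    have "C n = q powi (- j0) * (q powi (- j0)) ^ n"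
      unfolding C_def using q by (simp add: power_int_add[symmetric] powi_nat_mult[symmetric] algebra_simps)
    moreover have "(q powi (- j0)) ^ n = exp ((- real_of_int j0 * ln q) * real n)"
    proof -
      have "q powi (- j0) = exp (- real_of_int j0 * ln q)"
      proof -
        have "q powi (- j0) = exp (ln q) powi (- j0)" using q by simp
        also have "\<dots> = exp (- real_of_int j0 * ln q)" by (simp add: exp_power_int)
        finally show ?thesis .
      qed
      then show ?thesis by (simp add: exp_of_nat_mult[symmetric] algebra_simps)
    qed
    ultimately show ?thesis by simp
  qed
  have ev': "\<forall>\<^sub>F n in sequentially. Am q c' n \<le> (q powi (- j0) * K) * exp (\<beta> * real n ^ 2 + (\<gamma> - real_of_int j0 * ln q) * real n)"
    using ev
  proof eventually_elim
    case (elim n)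
    have "Am q c' n = C n * Am q c n" by (rule AmEq)
    also have "\<dots> \<le> C n * (K * exp (\<beta> * real n ^ 2 + \<gamma> * real n))"
      by (rule mult_left_mono[OF elim]) (use Cpos in \<open>simp add: less_imp_le\<close>)
    also have "\<dots> = (q powi (- j0) * K) * exp (\<beta> * real n ^ 2 + (\<gamma> - real_of_int j0 * ln q) * real n)"
      by (simp add: Cexp mult_exp_exp algebra_simps)
    finally show ?case .
  qed
  have "c' 0 = 0" by (rule core[OF q Z' S' \<beta> ev'])
  then show ?thesis by (simp add: c'_def)
qed



lemma qdens_nonneg:
  assumes q: "0 < q" "q < 1" and P: "prob_space P" and sP: "sets P = sets borel"
    and dens: "q_density q P f" and x: "x > 0"
  shows "0 \<le> f x"
proof -
  have qx: "q * x > 0" using q x by simp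
  have s1: "summable (\<lambda>j. f (x * q ^ j) * q ^ j)" and d1: "distr_fun P x = jackson_int q x f"
    using dens x unfolding q_density_def by auto
  have d2: "distr_fun P (q * x) = jackson_int q (q * x) f"
    using dens qx unfolding q_density_def by auto
  define s where "s = (\<Sum>j. f (x * q ^ j) * q ^ j)"
  have h: "(\<Sum>j. f (x * q ^ Suc j) * q ^ Suc j) = s - f x"
    using suminf_split_head[OF s1] by (simp add: s_def)
  have "(\<Sum>j. f (q * x * q ^ j) * q ^ j) * q = (\<Sum>j. f (x * q ^ Suc j) * q ^ Suc j)"
  proof -
    have s1': "summable (\<lambda>j. f (x * q ^ Suc j) * q ^ Suc j)"
      using s1 by (subst summable_Suc_iff)
    have e: "(\<lambda>j. f (x * q ^ Suc j) * q ^ Suc j) = (\<lambda>j. f (q * x * q ^ j) * q ^ j * q)"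
      by (auto simp: algebra_simps)
    have s2: "summable (\<lambda>j. f (q * x * q ^ j) * q ^ j)"
      using summable_divide[OF s1', of q] q unfolding e by (simp add: mult.assoc mult.left_commute[of q x])
    show ?thesis unfolding e by (rule suminf_mult2[OF s2])
  qed
  then have tq: "(\<Sum>j. f (q * x * q ^ j) * q ^ j) * q = s - f x" using h by simp
  have j2: "jackson_int q (q * x) f = x * (1 - q) * (s - f x)"
  proof -
    have "jackson_int q (q * x) f = x * (1 - q) * ((\<Sum>j. f (q * x * q ^ j) * q ^ j) * q)"
      unfolding jackson_int_def by (simp only: mult_ac)
    then show ?thesis using tq by simp
  qed
  have j1: "jackson_int q x f = x * (1 - q) * s" by (simp add: jackson_int_def s_def)
  interpret prob_space P by (rule P)
  have "distr_fun P (q * x) \<le> distr_fun P x"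
    unfolding distr_fun_def
    by (rule finite_measure_mono) (use q x sP in \<open>auto simp: mult_le_cancel_right1\<close>)
  then have "x * (1 - q) * (s - f x) \<le> x * (1 - q) * s" using d1 d2 j1 j2 by simp
  then have "0 \<le> x * (1 - q) * f x" by (simp add: algebra_simps)
  moreover have "x * (1 - q) > 0" using q x by simp
  ultimately show ?thesis by (simp add: zero_le_mult_iff)
qed



theorem proposition1:
  fixes q A :: real and M :: "'a measure" and X :: "'a \<Rightarrow> real" and f :: "real \<Rightarrow> real"
  assumes "0 < q" and "q < 1"
    and "prob_space M" and "X \<in> borel_measurable M" and "AE \<omega> in M. 0 \<le> X \<omega>"
    and "q_density q (distr M borel X) f"
    and "\<forall>n. q_moment_finite q n f"
    and "limsup (\<lambda>n. ereal (ln (q_moment q n f) / (real n)\<^sup>2)) = ereal A"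
    and "A < ln (1 / q) / 2"
  shows "q_moment_determinate q (distr M borel X) f"
proof -
  have q: "0 < q" "q < 1" using assms(1,2) .
  have PX: "prob_space (distr M borel X)"
    using prob_space.prob_space_distr[OF assms(3) assms(4)] .
  have sPX: "sets (distr M borel X) = sets borel" by simp
  have lnq: "ln (1 / q) = - ln q" using q by (simp add: ln_div)
  define \<beta> where "\<beta> = (A + ln (1 / q) / 2) / 2"
  have \<beta>1: "A < \<beta>" and \<beta>2: "\<beta> < - ln q / 2" using assms(9) lnq by (auto simp: \<beta>_def)
  show ?thesis unfolding q_moment_determinate_def
  proof (intro allI impI)
    fix Q g
    assume H: "nonneg_distribution Q \<and> q_density q Q g \<and>
        (\<forall>k. q_moment_finite q k g \<and> q_moment q k g = q_moment q k f)"
    have PQ: "prob_space Q" and sQ: "sets Q = sets borel"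
      using H unfolding nonneg_distribution_def by auto
    define c where "c j = f (q powi j) - g (q powi j)" for j
    define tf where "tf n j = q powi (j * int (n+1)) * f (q powi j)" for n :: nat and j
    define tg where "tg n j = q powi (j * int (n+1)) * g (q powi j)" for n :: nat and j
    have fnn: "0 \<le> f (q powi j)" for j
      by (rule qdens_nonneg[OF q PX sPX assms(6)]) (use q in simp)
    have gnn: "0 \<le> g (q powi j)" for j
      by (rule qdens_nonneg[OF q PQ sQ]) (use q H in simp_all)
    have Sf: "tf n summable_on UNIV" for n
      using assms(7) unfolding q_moment_finite_def q_moment_term_def tf_def by blast
    have Sg: "tg n summable_on UNIV" for n
      using H unfolding q_moment_finite_def q_moment_term_def tg_def by blast
    have Ieq: "infsum (tg n) UNIV = infsum (tf n) UNIV" for n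
    proof -
      have "q_moment q n g = q_moment q n f" using H by blast
      then show ?thesis using q unfolding q_moment_def q_moment_term_def tf_def tg_def by simp
    qed
    have Z: "Zp q c" unfolding Zp_def
    proof
      fix n :: nat
      have "((\<lambda>j. tf n j + - tg n j) has_sum (infsum (tf n) UNIV + - infsum (tg n) UNIV)) UNIV"
        by (intro has_sum_add has_sum_uminusI has_sum_infsum Sf Sg)
      moreover have "(\<lambda>j. tf n j + - tg n j) = (\<lambda>j. q powi (j * int (n+1)) * c j)"
        by (auto simp: tf_def tg_def c_def algebra_simps)
      ultimately show "((\<lambda>j. q powi (j * int (n+1)) * c j) has_sum 0) UNIV" using Ieq by simp
    qed
    have cbd: "q powi (j * int (n+1)) * \<bar>c j\<bar> \<le> tf n j + tg n j" for n j
    proof -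
      have "\<bar>c j\<bar> \<le> f (q powi j) + g (q powi j)" using fnn[of j] gnn[of j] by (simp add: c_def)
      then show ?thesis using q unfolding tf_def tg_def by (simp add: mult_left_mono distrib_left[symmetric])
    qed
    have Sabs: "(\<lambda>j. q powi (j * int (n+1)) * \<bar>c j\<bar>) summable_on UNIV" for n
      by (rule summable_on_comparison_test[OF summable_on_add[OF Sf Sg]]) (use cbd q in auto)
    have Ambd: "Am q c n \<le> 2 / (1 - q) * q_moment q n f" for n
    proof -
      have "Am q c n \<le> infsum (\<lambda>j. tf n j + tg n j) UNIV"
        unfolding Am_def by (rule infsum_mono[OF Sabs summable_on_add[OF Sf Sg] cbd])
      also have "\<dots> = infsum (tf n) UNIV + infsum (tg n) UNIV" by (rule infsum_add[OF Sf Sg])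
      also have "\<dots> = 2 / (1 - q) * q_moment q n f"
        using q Ieq[of n] unfolding q_moment_def q_moment_term_def tf_def by simp
      finally show ?thesis .
    qed
    have ev0: "\<forall>\<^sub>F n in sequentially. ereal (ln (q_moment q n f) / (real n)\<^sup>2) < ereal \<beta>"
      by (rule Limsup_lessD) (use assms(8) \<beta>1 in simp)
    have ev: "\<forall>\<^sub>F n in sequentially. Am q c n \<le> 2 / (1 - q) * exp (\<beta> * real n ^ 2 + 0 * real n)"
      using ev0 eventually_ge_at_top[of "1::nat"]
    proof eventually_elim
      case (elim n)
      have n2: "(real n)\<^sup>2 > 0" using elim by simp
      have l0: "ln (q_moment q n f) / (real n)\<^sup>2 < \<beta>" using elim(1) by simp
      have l: "ln (q_moment q n f) < \<beta> * (real n)\<^sup>2"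
        using l0 n2 by (simp add: pos_divide_less_eq)
      have m: "q_moment q n f \<le> exp (\<beta> * real n ^ 2)"
      proof (cases "q_moment q n f > 0")
        case True
        then have "q_moment q n f = exp (ln (q_moment q n f))" by simp
        also have "\<dots> \<le> exp (\<beta> * real n ^ 2)" using l by simp
        finally show ?thesis .
      next
        case False
        moreover have "0 < exp (\<beta> * real n ^ 2)" by simp
        ultimately show ?thesis by linarith
      qed
      have "Am q c n \<le> 2 / (1 - q) * q_moment q n f" by (rule Ambd)
      also have "\<dots> \<le> 2 / (1 - q) * exp (\<beta> * real n ^ 2)"
        by (rule mult_left_mono[OF m]) (use q in simp)
      finally show ?case by simp
    qed
    show "q_equiv q f g" unfolding q_equiv_def
    proof
      fix j0 :: int
      have "c j0 = 0" by (rule lattice_unique[OF q Z Sabs \<beta>2 ev])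
      then show "f (q powi j0) = g (q powi j0)" by (simp add: c_def)
    qed
  qed
qed

end
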